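(* Let $d\ge 1$, $q\ge 2$ be integers and let $\mathfrak{X}=H(d,q)$ be the Hamming scheme on $X=\{0,1,\dots,q-1\}^d$, with base vertex $u_0\in X$. Then for every $t=0,1,\dots,d$, \[ \mathrm{Hom}_0(X)+\mathrm{Hom}_1(X)+\cdots+\mathrm{Hom}_t(X)=L_0(X)+L_1(X)+\cdots+L_t(X). \]
   Context: $\mathcal{F}(X)$ denotes the space of real-valued functions on $X$ (identified with $\mathbb{R}^X$). The Hamming scheme $H(d,q)$ has relations $R_r=\{(x,y)\in X\times X : x,y \text{ differ in exactly } r \text{ coordinates}\}$, $r=0,\dots,d$. The shells are $X_r=\{x\in X : (u_0,x)\in R_r\}$. For $z\in X_j$ define $f_z\in\mathcal{F}(X)$ by $f_z(x)=1$ if $x\in X_i$ for some $i\ge j$ and $(x,z)\in R_{i-j}$, and $f_z(x)=0$ otherwise (equivalently, $z$ lies on a geodesic between $u_0$ and $x$ in the Hamming graph). Set $\mathrm{Hom}_j(X)=\mathrm{span}\{f_z : z\in X_j\}$. Let $E_0,\dots,E_d$ be the primitive idempotents of the Bose–Mesner algebra in the $Q$-polynomial ordering, i.e. $E_j$ is the orthogonal projection onto the eigenspace of the adjacency matrix of the Hamming graph (adjacency $=R_1$) for the eigenvalue $(q-1)d-qj$; $L_j(X)$ is the column space of $E_j$. *)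

theory Defs
  imports "HOL-Analysis.Analysis" "HOL-Library.Function_Algebras"
begin

definition hamX :: "nat \<Rightarrow> nat \<Rightarrow> nat list set" where
  "hamX d q = {x. length x = d \<and> (\<forall>i<d. x ! i < q)}"

text \<open>Hamming distance: (x,y) in R_r iff hdist x y = r.\<close>
definition hdist :: "nat list \<Rightarrow> nat list \<Rightarrow> nat" where
  "hdist x y = card {i. i < length x \<and> x ! i \<noteq> y ! i}"

definition shell :: "nat \<Rightarrow> nat \<Rightarrow> nat list \<Rightarrow> nat \<Rightarrow> nat list set" where
  "shell d q u0 r = {x \<in> hamX d q. hdist u0 x = r}"

definition fscale :: "real \<Rightarrow> (nat list \<Rightarrow> real) \<Rightarrow> (nat list \<Rightarrow> real)" where
  "fscale c f = (\<lambda>x. c * f x)"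

definition fspan :: "(nat list \<Rightarrow> real) set \<Rightarrow> (nat list \<Rightarrow> real) set" where
  "fspan S = module.span fscale S"

definition fz :: "nat \<Rightarrow> nat \<Rightarrow> nat list \<Rightarrow> nat \<Rightarrow> nat list \<Rightarrow> nat list \<Rightarrow> real" where
  "fz d q u0 j z x = (if \<exists>i\<ge>j. x \<in> shell d q u0 i \<and> hdist x z = i - j then 1 else 0)"

definition Hom :: "nat \<Rightarrow> nat \<Rightarrow> nat list \<Rightarrow> nat \<Rightarrow> (nat list \<Rightarrow> real) set" where
  "Hom d q u0 j = fspan (fz d q u0 j ` shell d q u0 j)"

definition adj :: "nat \<Rightarrow> nat \<Rightarrow> (nat list \<Rightarrow> real) \<Rightarrow> (nat list \<Rightarrow> real)" where
  "adj d q f x = (\<Sum>y\<in>{y \<in> hamX d q. hdist x y = 1}. f y)"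

text \<open>L_j(X): column space of E_j, i.e. the eigenspace of the adjacency
  operator on F(X) for the eigenvalue (q-1)d - qj.  Elements of F(X) are
  functions vanishing outside X.\<close>
definition Lsp :: "nat \<Rightarrow> nat \<Rightarrow> nat \<Rightarrow> (nat list \<Rightarrow> real) set" where
  "Lsp d q j = {f. (\<forall>x. x \<notin> hamX d q \<longrightarrow> f x = 0) \<and>
      (\<forall>x\<in>hamX d q. adj d q f x = ((real q - 1) * real d - real q * real j) * f x)}"

end

theory Submission
  imports Defs
begin


interpretation fm: module fscale
  by unfold_locales (auto simp: fscale_def algebra_simps)

lemma fspan_eq: "fspan = fm.span" by (simp add: fspan_def fun_eq_iff)

lemma sum_fun_apply: "(sum f A) x = (\<Sum>a\<in>A. f a x)"
  by (induction A rule: infinite_finite_induct) auto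

lemma upd_in_hamX: "x \<in> hamX d q \<Longrightarrow> a < q \<Longrightarrow> x[i:=a] \<in> hamX d q"
  by (cases "i < length x") (auto simp: hamX_def nth_list_update)

locale ham =
  fixes d q :: nat
  assumes q2: "2 \<le> q"
begin

abbreviation "X \<equiv> hamX d q"

definition P :: "nat \<Rightarrow> (nat list \<Rightarrow> real) \<Rightarrow> nat list \<Rightarrow> real" where
  "P i f x = (if x \<in> X then (\<Sum>a<q. f (x[i:=a])) / real q else 0)"

definition Q :: "nat set \<Rightarrow> nat \<Rightarrow> (nat list \<Rightarrow> real) \<Rightarrow> nat list \<Rightarrow> real" where
  "Q S i g = (if i \<in> S then (\<lambda>x. g x - P i g x) else P i g)"

primrec E :: "nat set \<Rightarrow> nat \<Rightarrow> (nat list \<Rightarrow> real) \<Rightarrow> nat list \<Rightarrow> real" where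
  "E S 0 f = f"
| "E S (Suc k) f = Q S k (E S k f)"

definition zo :: "(nat list \<Rightarrow> real) \<Rightarrow> bool" where
  "zo f \<longleftrightarrow> (\<forall>x. x \<notin> X \<longrightarrow> f x = 0)"

definition indep :: "nat \<Rightarrow> (nat list \<Rightarrow> real) \<Rightarrow> bool" where
  "indep i g \<longleftrightarrow> (\<forall>x\<in>X. \<forall>a<q. g (x[i:=a]) = g x)"

lemma qpos: "real q > 0" using q2 by simp

lemma P_idem: "P i (P i f) = P i f"
proof
  fix x
  show "P i (P i f) x = P i f x"
  proof (cases "x \<in> X")
    case True
    have "P i (P i f) x = (\<Sum>a<q. (\<Sum>b<q. f (x[i:=b])) / real q) / real q"
      using True by (simp add: P_def upd_in_hamX)
    also have "\<dots> = (\<Sum>b<q. f (x[i:=b])) / real q" using qpos by simp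
    finally show ?thesis using True by (simp add: P_def)
  qed (simp add: P_def)
qed

lemma P_comm: "P i (P m f) = P m (P i f)"
proof (cases "i = m")
  case False
  show ?thesis
  proof
    fix x
    show "P i (P m f) x = P m (P i f) x"
    proof (cases "x \<in> X")
      case True
      have "P i (P m f) x = (\<Sum>a<q. (\<Sum>b<q. f ((x[i:=a])[m:=b])) / real q) / real q"
        using True by (simp add: P_def upd_in_hamX)
      also have "\<dots> = (\<Sum>b<q. (\<Sum>a<q. f ((x[m:=b])[i:=a])) / real q) / real q"
        using False by (simp add: sum_divide_distrib[symmetric] list_update_swap, subst sum.swap, simp)
      also have "\<dots> = P m (P i f) x"
        using True by (simp add: P_def upd_in_hamX)
      finally show ?thesis .
    qed (simp add: P_def)
  qed
qed simp

lemma P_diff: "P i (\<lambda>x. f x - g x) = (\<lambda>x. P i f x - P i g x)"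
  by (auto simp: P_def fun_eq_iff sum_subtractf diff_divide_distrib)

lemma P_scale: "P i (\<lambda>x. c * f x) = (\<lambda>x. c * P i f x)"
  by (auto simp: P_def fun_eq_iff sum_distrib_left)

lemma P_sum: "P i (\<lambda>x. \<Sum>m\<in>I. h m x) = (\<lambda>x. \<Sum>m\<in>I. P i (h m) x)"
  unfolding P_def fun_eq_iff by (subst sum.swap) (simp add: sum_divide_distrib)

lemma P_zero: "P i (\<lambda>x. 0) = (\<lambda>x. 0)"
  by (auto simp: P_def fun_eq_iff)

lemma Q_diff: "Q S m (\<lambda>x. f x - g x) = (\<lambda>x. Q S m f x - Q S m g x)"
  by (auto simp: Q_def P_diff)

lemma Q_scale: "Q S m (\<lambda>x. c * f x) = (\<lambda>x. c * Q S m f x)"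
  by (auto simp: Q_def P_scale algebra_simps)

lemma Q_sum: "Q S m (\<lambda>x. \<Sum>i\<in>I. h i x) = (\<lambda>x. \<Sum>i\<in>I. Q S m (h i) x)"
  by (auto simp: Q_def P_sum sum_subtractf)

lemma Q_zero: "Q S m (\<lambda>x. 0) = (\<lambda>x. 0)"
  by (auto simp: Q_def P_zero)

lemma P_Q_comm: "P i (Q S m g) = Q S m (P i g)"
  by (auto simp: Q_def P_diff P_comm)

lemma E_scale: "E S k (\<lambda>x. c * f x) = (\<lambda>x. c * E S k f x)"
  by (induction k) (simp_all add: Q_scale)

lemma E_sum: "E S k (\<lambda>x. \<Sum>i\<in>I. h i x) = (\<lambda>x. \<Sum>i\<in>I. E S k (h i) x)"
  by (induction k) (simp_all add: Q_sum)

lemma P_E_comm: "P i (E S k f) = E S k (P i f)"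
  by (induction k) (simp_all add: P_Q_comm)

lemma P_E: "i < k \<Longrightarrow> P i (E S k f) = (if i \<in> S then (\<lambda>x. 0) else E S k f)"
proof (induction k)
  case 0 then show ?case by simp
next
  case (Suc k)
  show ?case
  proof (cases "i = k")
    case True
    then show ?thesis
      by (auto simp: Q_def P_diff P_idem)
  next
    case False
    then have "i < k" using Suc by simp
    then show ?thesis using Suc.IH
      by (auto simp: P_Q_comm Q_zero)
  qed
qed

lemma E_cong: "(\<And>i. i < k \<Longrightarrow> i \<in> S \<longleftrightarrow> i \<in> S') \<Longrightarrow> E S k f = E S' k f"
  by (induction k) (auto simp: Q_def)

lemma E_expand: "f x = (\<Sum>S\<in>Pow {..<k}. E S k f x)"
proof (induction k arbitrary: x)
  case 0 then show ?case by simp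
next
  case (Suc k)
  have fin: "finite (Pow {..<k})" by simp
  have "(\<Sum>S\<in>Pow {..<Suc k}. E S (Suc k) f x)
      = (\<Sum>S\<in>Pow {..<k}. E S (Suc k) f x) + (\<Sum>S\<in>insert k ` Pow {..<k}. E S (Suc k) f x)"
    unfolding lessThan_Suc Pow_insert
    by (rule sum.union_disjoint) auto
  also have "(\<Sum>S\<in>insert k ` Pow {..<k}. E S (Suc k) f x) = (\<Sum>S\<in>Pow {..<k}. E (insert k S) (Suc k) f x)"
    by (rule sum.reindex_cong[where l="insert k"]) (auto intro!: inj_onI)
  also have "\<dots> = (\<Sum>S\<in>Pow {..<k}. E S k f x - P k (E S k f) x)"
  proof (rule sum.cong)
    fix S assume "S \<in> Pow {..<k}"
    then have "E (insert k S) k f = E S k f" by (intro E_cong) auto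
    then show "E (insert k S) (Suc k) f x = E S k f x - P k (E S k f) x" by (simp add: Q_def)
  qed simp
  also have "(\<Sum>S\<in>Pow {..<k}. E S (Suc k) f x) = (\<Sum>S\<in>Pow {..<k}. P k (E S k f) x)"
    by (rule sum.cong) (auto simp: Q_def)
  finally show ?case using Suc.IH[of x] by (simp add: sum_subtractf)
qed


end


context ham begin
lemma zo_P: "zo (P i f)" by (simp add: zo_def P_def)
lemma zo_Q: "zo f \<Longrightarrow> zo (Q S m f)" by (simp add: zo_def P_def Q_def)
lemma zo_E: "zo f \<Longrightarrow> zo (E S k f)" by (induction k) (simp_all add: zo_Q)

lemma indep_P_same: "indep i (P i g)"
  by (simp add: indep_def P_def upd_in_hamX)

lemma indep_P: "indep i g \<Longrightarrow> indep i (P m g)"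
proof (cases "i = m")
  case False
  assume ind: "indep i g"
  show ?thesis unfolding indep_def
  proof (intro ballI allI impI)
    fix x a assume x: "x \<in> X" and a: "a < q"
    have "(\<Sum>b<q. g ((x[i:=a])[m:=b])) = (\<Sum>b<q. g (x[m:=b]))"
    proof (rule sum.cong)
      fix b assume "b \<in> {..<q}"
      then have "x[m:=b] \<in> X" using x upd_in_hamX by auto
      moreover have "(x[i:=a])[m:=b] = (x[m:=b])[i:=a]" using False by (rule list_update_swap)
      ultimately show "g ((x[i:=a])[m:=b]) = g (x[m:=b])"
        using ind a by (simp add: indep_def)
    qed simp
    then show "P m g (x[i := a]) = P m g x" using x a by (simp add: P_def upd_in_hamX)
  qed
qed (simp add: indep_P_same)

lemma indep_Q: "indep i g \<Longrightarrow> indep i (Q S m g)"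
  using indep_P[of i g m] by (auto simp: Q_def indep_def)

lemma indep_E: "i \<notin> S \<Longrightarrow> i < k \<Longrightarrow> indep i (E S k f)"
proof (induction k)
  case 0 then show ?case by simp
next
  case (Suc k)
  show ?case
  proof (cases "i = k")
    case True then show ?thesis using Suc by (simp add: Q_def indep_P_same)
  next
    case False then show ?thesis using Suc by (simp add: indep_Q)
  qed
qed

lemma indep_P_id: "indep i g \<Longrightarrow> zo g \<Longrightarrow> P i g = g"
proof
  fix x assume ind: "indep i g" and z: "zo g"
  show "P i g x = g x"
  proof (cases "x \<in> X")
    case True
    then have "(\<Sum>a<q. g (x[i:=a])) = (\<Sum>a<q. g x)" using ind by (simp add: indep_def)
    then show ?thesis using True qpos by (simp add: P_def)
  qed (use z in \<open>simp add: P_def zo_def\<close>)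
qed

lemma indep_chain:
  assumes "finite I" "I \<subseteq> {..<d}" "\<forall>i\<in>I. indep i g"
  shows "x \<in> X \<Longrightarrow> y \<in> X \<Longrightarrow> (\<forall>m<d. m \<notin> I \<longrightarrow> x!m = y!m) \<Longrightarrow> g x = g y"
  using assms
proof (induction I arbitrary: x rule: finite_induct)
  case empty
  then have "x = y" by (auto simp: hamX_def intro!: nth_equalityI)
  then show ?case by simp
next
  case (insert i I)
  define x1 where "x1 = x[i := y!i]"
  have il: "i < d" using insert by auto
  have yi: "y!i < q" using insert(5) il by (auto simp: hamX_def)
  have x1X: "x1 \<in> X" using insert(4) yi by (simp add: x1_def upd_in_hamX)
  have "g x1 = g x" using insert(4,8) yi by (auto simp: x1_def indep_def)
  moreover have "g x1 = g y"
    apply (rule insert.IH[OF x1X insert(5)])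
    using insert(4,6,7,8) il by (auto simp: x1_def hamX_def nth_list_update)
  ultimately show ?case by simp
qed

lemma adj_nb:
  assumes x: "x \<in> X"
  shows "{y \<in> X. hdist x y = 1} = (\<lambda>(i,a). x[i:=a]) ` (SIGMA i:{..<d}. {..<q} - {x!i})"
proof
  have lx: "length x = d" using x by (simp add: hamX_def)
  show "(\<lambda>(i,a). x[i:=a]) ` (SIGMA i:{..<d}. {..<q} - {x!i}) \<subseteq> {y \<in> X. hdist x y = 1}"
  proof (rule image_subsetI)
    fix p assume p: "p \<in> (SIGMA i:{..<d}. {..<q} - {x!i})"
    obtain i a where pia: "p = (i,a)" by (cases p)
    have i: "i < d" and a: "a < q" "a \<noteq> x!i" using p pia by auto
    have "{m. m < length x \<and> x!m \<noteq> x[i:=a]!m} = {i}"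
      using i a lx by (auto simp: nth_list_update)
    then show "(\<lambda>(i,a). x[i:=a]) p \<in> {y \<in> X. hdist x y = 1}"
      using x a upd_in_hamX pia by (simp add: hdist_def)
  qed
  show "{y \<in> X. hdist x y = 1} \<subseteq> (\<lambda>(i,a). x[i:=a]) ` (SIGMA i:{..<d}. {..<q} - {x!i})"
  proof (rule subsetI)
    fix y assume yy: "y \<in> {y \<in> X. hdist x y = 1}"
    then have y: "y \<in> X" and h: "hdist x y = 1" by auto
    have "card {m. m < length x \<and> x!m \<noteq> y!m} = 1" using h by (simp add: hdist_def)
    then obtain i where i: "{m. m < length x \<and> x!m \<noteq> y!m} = {i}"
      by (rule card_1_singletonE)
    then have il: "i < d" and ne: "x!i \<noteq> y!i" using lx by auto
    have oth: "x!m = y!m" if "m < d" "m \<noteq> i" for m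
    proof (rule ccontr)
      assume "x!m \<noteq> y!m"
      then have "m \<in> {m. m < length x \<and> x!m \<noteq> y!m}" using that lx by simp
      then show False using i that(2) by simp
    qed
    have yq: "y!i < q" using y il by (auto simp: hamX_def)
    have ly: "length y = d" using y by (simp add: hamX_def)
    have "y = x[i := y!i]"
    proof (rule nth_equalityI)
      show "length y = length (x[i := y ! i])" using ly lx by simp
      fix m assume "m < length y"
      then have "m < d" using ly by simp
      then show "y ! m = x[i := y ! i] ! m"
        using oth[of m] lx by (cases "m = i") simp_all
    qed
    moreover have "(i, y!i) \<in> (SIGMA i:{..<d}. {..<q} - {x!i})" using il yq ne by simp
    ultimately show "y \<in> (\<lambda>(i,a). x[i:=a]) ` (SIGMA i:{..<d}. {..<q} - {x!i})"
      by (metis (no_types, lifting) case_prod_conv image_eqI)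
  qed
qed

lemma adj_formula:
  assumes x: "x \<in> X"
  shows "adj d q h x = real q * (\<Sum>i<d. P i h x) - real d * h x"
proof -
  have lx: "length x = d" using x by (simp add: hamX_def)
  have inj: "inj_on (\<lambda>(i,a). x[i:=a]) (SIGMA i:{..<d}. {..<q} - {x!i})"
  proof (rule inj_onI)
    fix p p' assume p: "p \<in> (SIGMA i:{..<d}. {..<q} - {x!i})" and p': "p' \<in> (SIGMA i:{..<d}. {..<q} - {x!i})"
      and eq: "(\<lambda>(i,a). x[i:=a]) p = (\<lambda>(i,a). x[i:=a]) p'"
    obtain i a where pia: "p = (i,a)" by (cases p)
    obtain i' a' where pia': "p' = (i',a')" by (cases p')
    have A: "i < d" "a < q" "a \<noteq> x!i" "i' < d" "a' < q" "a' \<noteq> x!i'" "x[i:=a] = x[i':=a']"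
      using p p' eq pia pia' by auto
    have "i = i' \<and> a = a'"
    proof (cases "i = i'")
      case True then show ?thesis using A lx by (metis nth_list_update_eq)
    next
      case False
      have "a = x[i:=a] ! i" using A(1) lx by simp
      also have "\<dots> = x[i':=a'] ! i" using A by simp
      also have "\<dots> = x ! i" using False by simp
      finally show ?thesis using A by simp
    qed
    then show "p = p'" using pia pia' by simp
  qed
  have "adj d q h x = (\<Sum>p\<in>(SIGMA i:{..<d}. {..<q} - {x!i}). h ((\<lambda>(i,a). x[i:=a]) p))"
    unfolding adj_def adj_nb[OF x] by (rule sum.reindex[OF inj, unfolded comp_def])
  also have "\<dots> = (\<Sum>i<d. \<Sum>a\<in>{..<q} - {x!i}. h (x[i:=a]))"
    by (subst sum.Sigma) (auto split: prod.splits intro!: sum.cong)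
  also have "\<dots> = (\<Sum>i<d. (\<Sum>a<q. h (x[i:=a])) - h x)"
  proof (rule sum.cong)
    fix i assume "i \<in> {..<d}"
    then have "x!i \<in> {..<q}" using x by (auto simp: hamX_def)
    then show "(\<Sum>a\<in>{..<q} - {x!i}. h (x[i:=a])) = (\<Sum>a<q. h (x[i:=a])) - h x"
      by (simp add: sum_diff1)
  qed simp
  also have "\<dots> = (\<Sum>i<d. real q * P i h x - h x)"
    using x qpos by (simp add: P_def)
  finally show ?thesis by (simp add: sum_subtractf sum_distrib_left)
qed

lemma Lsp_iff:
  "h \<in> Lsp d q j \<longleftrightarrow> zo h \<and> (\<forall>x\<in>X. (\<Sum>i<d. P i h x) = (real d - real j) * h x)"
proof -
  have "\<And>x. x \<in> X \<Longrightarrow> adj d q h x = ((real q - 1) * real d - real q * real j) * h x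
     \<longleftrightarrow> (\<Sum>i<d. P i h x) = (real d - real j) * h x"
  proof -
    fix x assume x: "x \<in> X"
    have "adj d q h x = ((real q - 1) * real d - real q * real j) * h x
      \<longleftrightarrow> real q * ((\<Sum>i<d. P i h x) - (real d - real j) * h x) = 0"
      unfolding adj_formula[OF x] by (simp add: algebra_simps)
    also have "\<dots> \<longleftrightarrow> (\<Sum>i<d. P i h x) = (real d - real j) * h x"
      using qpos by simp
    finally show "?thesis x" .
  qed
  then show ?thesis by (auto simp: Lsp_def zo_def)
qed

end


context ham begin

definition V :: "nat \<Rightarrow> (nat list \<Rightarrow> real) set" where
  "V t = {g. zo g \<and> (\<exists>S\<subseteq>{..<d}. card S \<le> t \<and> (\<forall>i<d. i \<notin> S \<longrightarrow> indep i g))}"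

lemma sum_notin: "S \<subseteq> {..<d} \<Longrightarrow> (\<Sum>i<d. if i \<in> S then 0 else c) = (real d - real (card S)) * (c::real)"
proof -
  assume S: "S \<subseteq> {..<d}"
  have "(\<Sum>i<d. if i \<in> S then 0 else c) = (\<Sum>i\<in>{..<d} - S. c)"
    by (simp add: sum.If_cases Diff_eq)
  also have "\<dots> = real (card ({..<d} - S)) * c" by simp
  also have "card ({..<d} - S) = d - card S" using S by (simp add: card_Diff_subset finite_subset)
  also have "real (d - card S) = real d - real (card S)"
    using S card_mono[of "{..<d}" S] by simp
  finally show ?thesis .
qed

lemma expand_fun: "f = (\<Sum>S\<in>Pow {..<d}. E S d f)"
  by (rule ext) (simp add: sum_fun_apply E_expand[of f _ d])

lemma E_zero_fun: "(\<lambda>x. 0::real) = 0" by (simp add: fun_eq_iff)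

lemma Lsp_in_V:
  assumes j: "j \<le> t" and f: "f \<in> Lsp d q j"
  shows "f \<in> fm.span (V t)"
proof -
  have zf: "zo f" and eig: "\<forall>x\<in>X. (\<Sum>i<d. P i f x) = (real d - real j) * f x"
    using f by (auto simp: Lsp_iff)
  have PsumF: "(\<lambda>x. \<Sum>i<d. P i f x) = (\<lambda>x. (real d - real j) * f x)"
  proof
    fix x show "(\<Sum>i<d. P i f x) = (real d - real j) * f x"
      using eig zf by (cases "x \<in> X") (auto simp: zo_def P_def)
  qed
  have trm: "E S d f \<in> fm.span (V t)" if S: "S \<in> Pow {..<d}" for S
  proof (cases "card S = j")
    case True
    have "E S d f \<in> V t"
    proof -
      have "S \<subseteq> {..<d}" "card S \<le> t" using S True j by auto
      moreover have "\<forall>i<d. i \<notin> S \<longrightarrow> indep i (E S d f)" using indep_E by blast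
      ultimately show ?thesis unfolding V_def using zo_E[OF zf] by blast
    qed
    then show ?thesis by (rule fm.span_base)
  next
    case False
    have Sd: "S \<subseteq> {..<d}" using S by simp
    have "(\<lambda>x. \<Sum>i<d. P i (E S d f) x) = (\<lambda>x. \<Sum>i<d. E S d (P i f) x)"
      by (simp add: P_E_comm)
    also have "\<dots> = E S d (\<lambda>x. \<Sum>i<d. P i f x)" by (simp add: E_sum)
    also have "\<dots> = (\<lambda>x. (real d - real j) * E S d f x)" by (simp add: PsumF E_scale)
    finally have e1: "\<And>x. (\<Sum>i<d. P i (E S d f) x) = (real d - real j) * E S d f x"
      by (simp add: fun_eq_iff)
    have e2: "\<And>x. (\<Sum>i<d. P i (E S d f) x) = (real d - real (card S)) * E S d f x"
      using P_E[of _ d S f] sum_notin[OF Sd] by (simp add: if_distribR)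
    have "E S d f = 0"
    proof
      fix x
      have "(real d - real j) * E S d f x = (real d - real (card S)) * E S d f x"
        using e1[of x] e2[of x] by (metis (no_types))
      then show "E S d f x = 0 x" using False by auto
    qed
    then show ?thesis by (simp add: fm.span_zero)
  qed
  have "(\<Sum>S\<in>Pow {..<d}. E S d f) \<in> fm.span (V t)"
    by (rule fm.span_sum) (rule trm)
  then show ?thesis using expand_fun[of f] by simp
qed

lemma V_in_Lsp:
  assumes g: "g \<in> V t"
  shows "g \<in> fm.span (\<Union>j\<in>{0..t}. Lsp d q j)"
proof -
  obtain S where S: "S \<subseteq> {..<d}" "card S \<le> t" and zg: "zo g"
    and ind: "\<forall>i<d. i \<notin> S \<longrightarrow> indep i g"
    using g by (auto simp: V_def)
  have trm: "E T d g \<in> fm.span (\<Union>j\<in>{0..t}. Lsp d q j)" if T: "T \<in> Pow {..<d}" for T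
  proof (cases "T \<subseteq> S")
    case True
    have Td: "T \<subseteq> {..<d}" using T by simp
    have "card T \<le> t" using True S card_mono[of S T] finite_subset[of S "{..<d}"] by auto
    moreover have "E T d g \<in> Lsp d q (card T)"
      unfolding Lsp_iff using zo_E[OF zg] P_E[of _ d T g] sum_notin[OF Td] by (simp add: if_distribR)
    ultimately show ?thesis by (intro fm.span_base) auto
  next
    case False
    then obtain i where i: "i \<in> T" "i \<notin> S" by auto
    then have il: "i < d" using T by auto
    have "P i g = g" using ind i il zg by (simp add: indep_P_id)
    then have "E T d g = E T d (P i g)" by simp
    also have "\<dots> = P i (E T d g)" by (simp add: P_E_comm)
    also have "\<dots> = 0" using P_E[OF il, of T g] i by (simp add: E_zero_fun)
    finally show ?thesis by (simp add: fm.span_zero)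
  qed
  have "(\<Sum>T\<in>Pow {..<d}. E T d g) \<in> fm.span (\<Union>j\<in>{0..t}. Lsp d q j)"
    by (rule fm.span_sum) (rule trm)
  then show ?thesis using expand_fun[of g] by simp
qed

end


context ham begin

definition ind :: "nat set \<Rightarrow> nat list \<Rightarrow> nat list \<Rightarrow> real" where
  "ind S w x = (if x \<in> X \<and> (\<forall>i\<in>S. x!i = w!i) then 1 else 0)"

lemma fz_eq:
  assumes u0: "u0 \<in> X" and z: "z \<in> shell d q u0 j"
  shows "fz d q u0 j z = ind {i. i < d \<and> u0!i \<noteq> z!i} z"
proof
  fix x
  define S where "S = {i. i < d \<and> u0!i \<noteq> z!i}"
  have lu: "length u0 = d" using u0 by (simp add: hamX_def)
  have zX: "z \<in> X" and hz: "card S = j" using z lu by (auto simp: shell_def hdist_def S_def)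
  show "fz d q u0 j z x = ind {i. i < d \<and> u0!i \<noteq> z!i} z x"
  proof (cases "x \<in> X")
    case False then show ?thesis by (simp add: fz_def ind_def shell_def)
  next
    case True
    have lx: "length x = d" using True by (simp add: hamX_def)
    define A where "A = {i. i < d \<and> u0!i \<noteq> x!i}"
    define B where "B = {i. i < d \<and> x!i \<noteq> z!i}"
    have fin: "finite A" "finite B" "finite S" by (auto simp: A_def B_def S_def)
    have hA: "hdist u0 x = card A" using lu by (simp add: hdist_def A_def)
    have hB: "hdist x z = card B" using lx by (simp add: hdist_def B_def)
    have fzx: "fz d q u0 j z x = (if j \<le> card A \<and> card B = card A - j then 1 else 0)"
      using True hA hB by (auto simp: fz_def shell_def)
    have sub1: "A \<subseteq> S \<union> B" by (auto simp: A_def B_def S_def)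
    have "(j \<le> card A \<and> card B = card A - j) \<longleftrightarrow> S \<inter> B = {}"
    proof
      assume h: "j \<le> card A \<and> card B = card A - j"
      then have cA: "card A = card S + card B" using hz by simp
      have "card A \<le> card (S \<union> B)" using sub1 fin by (simp add: card_mono)
      moreover have "card (S \<union> B) + card (S \<inter> B) = card S + card B"
        using fin card_Un_Int[of S B] by simp
      ultimately have "card (S \<inter> B) = 0" using cA by simp
      then show "S \<inter> B = {}" using fin by simp
    next
      assume h: "S \<inter> B = {}"
      have "A = S \<union> B" using h by (auto simp: A_def B_def S_def)
      then have "card A = card S + card B" using h fin card_Un_disjoint by simp
      then show "j \<le> card A \<and> card B = card A - j" using hz by simp
    qed
    moreover have "S \<inter> B = {} \<longleftrightarrow> (\<forall>i\<in>S. x!i = z!i)" by (auto simp: S_def B_def)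
    ultimately show ?thesis using True fzx by (simp add: ind_def S_def)
  qed
qed

lemma ind_V:
  assumes "S \<subseteq> {..<d}" "card S \<le> t"
  shows "ind S w \<in> V t"
proof -
  have "indep i (ind S w)" if "i < d" "i \<notin> S" for i
    unfolding indep_def
  proof (intro ballI allI impI)
    fix x a assume x: "x \<in> X" and a: "a < q"
    have "x[i:=a] \<in> X" using x a by (rule upd_in_hamX)
    moreover have "\<And>m. m \<in> S \<Longrightarrow> x[i:=a]!m = x!m"
      using that by (metis nth_list_update_neq)
    then have "(\<forall>m\<in>S. x[i:=a]!m = w!m) \<longleftrightarrow> (\<forall>m\<in>S. x!m = w!m)"
      by simp
    ultimately show "ind S w (x[i:=a]) = ind S w x" using x by (simp add: ind_def)
  qed
  then show ?thesis using assms unfolding V_def by (auto simp: zo_def ind_def)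
qed


lemma ind_span:
  assumes u0: "u0 \<in> X"
  shows "card {i\<in>S. w!i = u0!i} = n \<Longrightarrow> w \<in> X \<Longrightarrow> S \<subseteq> {..<d} \<Longrightarrow> card S \<le> t
    \<Longrightarrow> ind S w \<in> fm.span (\<Union>j\<in>{0..t}. Hom d q u0 j)"
proof (induction n arbitrary: S w rule: less_induct)
  case (less n S w)
  have lu: "length u0 = d" using u0 by (simp add: hamX_def)
  have lw: "length w = d" using less.prems(2) by (simp add: hamX_def)
  have finS: "finite S" using less.prems(3) finite_subset by blast
  show ?case
  proof (cases "{i\<in>S. w!i = u0!i} = {}")
    case True
    define z where "z = map (\<lambda>i. if i\<in>S then w!i else u0!i) [0..<d]"
    have zX: "z \<in> X"
      using less.prems(2) u0 by (auto simp: z_def hamX_def)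
    have Seq: "{i. i < d \<and> u0!i \<noteq> z!i} = S"
    proof -
      have "i \<in> S \<Longrightarrow> u0!i \<noteq> w!i" for i using True by auto
      then show ?thesis using less.prems(3) by (auto simp: z_def split: if_splits)
    qed
    have zsh: "z \<in> shell d q u0 (card S)"
      using zX Seq lu by (simp add: shell_def hdist_def)
    have "fz d q u0 (card S) z = ind S z" using fz_eq[OF u0 zsh] Seq by simp
    also have "ind S z = ind S w"
    proof -
      have "\<forall>i\<in>S. z!i = w!i" using less.prems(3) by (auto simp: z_def)
      then show ?thesis by (auto simp: ind_def fun_eq_iff)
    qed
    finally have e: "fz d q u0 (card S) z = ind S w" .
    have "fz d q u0 (card S) z \<in> Hom d q u0 (card S)"
      unfolding Hom_def fspan_eq by (rule fm.span_base) (use zsh in auto)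
    then have "ind S w \<in> (\<Union>j\<in>{0..t}. Hom d q u0 j)" using e less.prems(4) by auto
    then show ?thesis by (rule fm.span_base)
  next
    case False
    then obtain i where i: "i \<in> S" "w!i = u0!i" by auto
    have il: "i < d" using i less.prems(3) by auto
    define N where "N = {m\<in>S. w!m = u0!m}"
    have finN: "finite N" using finS by (simp add: N_def)
    have iN: "i \<in> N" using i by (simp add: N_def)
    have ltn: "card (N - {i}) < n" using less.prems(1) finN iN card_Diff1_less[OF finN iN] by (simp add: N_def[symmetric])
    have ident: "ind S w = ind (S - {i}) w - (\<Sum>a\<in>{..<q}-{u0!i}. ind S (w[i:=a]))"
    proof
      fix x
      show "ind S w x = (ind (S - {i}) w - (\<Sum>a\<in>{..<q}-{u0!i}. ind S (w[i:=a]))) x"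
      proof (cases "x \<in> X")
        case False then show ?thesis by (simp add: ind_def sum_fun_apply)
      next
        case xX: True
        show ?thesis
        proof (cases "\<forall>m\<in>S-{i}. x!m = w!m")
          case True
          have each: "ind S (w[i:=a]) x = (if x!i = a then 1 else 0)" for a
          proof -
            have "(\<forall>m\<in>S. x!m = w[i:=a]!m) \<longleftrightarrow> x!i = a"
              using True i(1) il lw by (auto simp: nth_list_update)
            then show ?thesis using xX by (simp add: ind_def)
          qed
          have xi: "x!i < q" using xX il by (auto simp: hamX_def)
          have "(\<Sum>a\<in>{..<q}-{u0!i}. ind S (w[i:=a]) x) = (if x!i \<in> {..<q}-{u0!i} then 1 else 0)"
            by (simp add: each sum.delta')
          moreover have "ind S w x = (if x!i = w!i then 1 else 0)"
            using True xX i(1) by (auto simp: ind_def)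
          moreover have "ind (S - {i}) w x = 1" using True xX by (simp add: ind_def)
          ultimately show ?thesis using xi i(2) by (simp add: sum_fun_apply)
        next
          case False
          then obtain m where m: "m \<in> S" "m \<noteq> i" "x!m \<noteq> w!m" by auto
          have "ind S (w[i:=a]) x = 0" for a
          proof -
            have "w[i:=a]!m = w!m" using m(2) by simp
            then have "\<not>(\<forall>m'\<in>S. x!m' = w[i:=a]!m')" using m by metis
            then show ?thesis by (simp add: ind_def)
          qed
          moreover have "ind S w x = 0" "ind (S - {i}) w x = 0" using m by (auto simp: ind_def)
          ultimately show ?thesis by (simp add: sum_fun_apply)
        qed
      qed
    qed
    have h1: "ind (S - {i}) w \<in> fm.span (\<Union>j\<in>{0..t}. Hom d q u0 j)"
    proof (rule less.IH[OF _ refl less.prems(2)])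
      have "{m\<in>S-{i}. w!m = u0!m} = N - {i}" by (auto simp: N_def)
      then show "card {m\<in>S-{i}. w!m = u0!m} < n" using ltn by simp
      show "S - {i} \<subseteq> {..<d}" using less.prems(3) by auto
      show "card (S - {i}) \<le> t" using less.prems(4) finS card_Diff1_le[of S i] by linarith
    qed
    have h2: "ind S (w[i:=a]) \<in> fm.span (\<Union>j\<in>{0..t}. Hom d q u0 j)" if a: "a \<in> {..<q}-{u0!i}" for a
    proof (rule less.IH[OF _ refl _ less.prems(3,4)])
      have "{m\<in>S. w[i:=a]!m = u0!m} = N - {i}"
        using a il lw by (auto simp: N_def nth_list_update)
      then show "card {m\<in>S. w[i:=a]!m = u0!m} < n" using ltn by simp
      show "w[i:=a] \<in> X" using less.prems(2) a by (simp add: upd_in_hamX)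
    qed
    show ?thesis unfolding ident
      by (intro fm.span_diff h1 fm.span_sum h2)
  qed
qed

lemma V_in_Hom:
  assumes u0: "u0 \<in> X" and g: "g \<in> V t"
  shows "g \<in> fm.span (\<Union>j\<in>{0..t}. Hom d q u0 j)"
proof -
  obtain S where S: "S \<subseteq> {..<d}" "card S \<le> t" and zg: "zo g"
    and ind: "\<forall>i<d. i \<notin> S \<longrightarrow> indep i g"
    using g by (auto simp: V_def)
  define R where "R = {w\<in>X. \<forall>m<d. m \<notin> S \<longrightarrow> w!m = 0}"
  have finX: "finite X"
  proof -
    have "X \<subseteq> {xs. set xs \<subseteq> {..<q} \<and> length xs = d}"
      by (auto simp: hamX_def in_set_conv_nth)
    moreover have "finite {xs. set xs \<subseteq> {..<q} \<and> length xs = d}"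
      by (rule finite_lists_length_eq) simp
    ultimately show ?thesis by (rule finite_subset)
  qed
  have finR: "finite R" using finX by (simp add: R_def)
  have eq: "g = (\<Sum>w\<in>R. fscale (g w) (ind S w))"
  proof
    fix x
    show "g x = (\<Sum>w\<in>R. fscale (g w) (ind S w)) x"
    proof (cases "x \<in> X")
      case False
      then show ?thesis using zg by (simp add: zo_def sum_fun_apply fscale_def ind_def)
    next
      case xX: True
      define x' where "x' = map (\<lambda>m. if m \<in> S then x!m else 0) [0..<d]"
      have lx: "length x = d" using xX by (simp add: hamX_def)
      have x'R: "x' \<in> R" using xX qpos by (auto simp: x'_def R_def hamX_def)
      have iff: "(\<forall>m\<in>S. x!m = w!m) \<longleftrightarrow> w = x'" if w: "w \<in> R" for w
      proof
        assume h: "\<forall>m\<in>S. x!m = w!m"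
        show "w = x'"
        proof (rule nth_equalityI)
          show "length w = length x'" using w by (simp add: R_def hamX_def x'_def)
          fix m assume "m < length w"
          then have "m < d" using w by (simp add: R_def hamX_def)
          then show "w!m = x'!m" using h w by (auto simp: x'_def R_def)
        qed
      next
        assume "w = x'"
        then show "\<forall>m\<in>S. x!m = w!m" using S(1) by (auto simp: x'_def)
      qed
      have "(\<Sum>w\<in>R. fscale (g w) (ind S w)) x = (\<Sum>w\<in>R. if w = x' then g w else 0)"
        unfolding sum_fun_apply
      proof (rule sum.cong)
        fix w assume w: "w \<in> R"
        show "fscale (g w) (ind S w) x = (if w = x' then g w else 0)"
          using iff[OF w] xX by (simp add: fscale_def ind_def)
      qed simp
      also have "\<dots> = g x'" using finR x'R by (simp add: sum.delta)
      also have "g x' = g x"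
      proof (rule indep_chain[of "{..<d} - S" g x' x])
        show "\<forall>i\<in>{..<d} - S. indep i g" using ind by auto
        show "x' \<in> X" using x'R by (simp add: R_def)
        show "\<forall>m<d. m \<notin> {..<d} - S \<longrightarrow> x'!m = x!m" by (auto simp: x'_def)
      qed (use xX in auto)
      finally show ?thesis by simp
    qed
  qed
  have "(\<Sum>w\<in>R. fscale (g w) (ind S w)) \<in> fm.span (\<Union>j\<in>{0..t}. Hom d q u0 j)"
  proof (rule fm.span_sum)
    fix w assume w: "w \<in> R"
    show "fscale (g w) (ind S w) \<in> fm.span (\<Union>j\<in>{0..t}. Hom d q u0 j)"
      by (rule fm.span_scale, rule ind_span[OF u0 refl]) (use w S in \<open>auto simp: R_def\<close>)
  qed
  then show ?thesis using eq by simp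
qed

end

lemma span_eqI: "A \<subseteq> fm.span B \<Longrightarrow> B \<subseteq> fm.span A \<Longrightarrow> fm.span A = fm.span B"
  by (metis fm.span_minimal fm.subspace_span subset_antisym)

theorem proposition1p5:
  fixes d q t :: nat and u0 :: "nat list"
  assumes "d \<ge> 1" and "q \<ge> 2" and "u0 \<in> hamX d q" and "t \<le> d"
  shows "fspan (\<Union>j\<in>{0..t}. Hom d q u0 j) = fspan (\<Union>j\<in>{0..t}. Lsp d q j)"
proof -
  interpret ham d q using assms(2) by unfold_locales
  have u0: "u0 \<in> hamX d q" by fact
  have lu: "length u0 = d" using u0 by (simp add: hamX_def)
  have "fm.span (\<Union>j\<in>{0..t}. Hom d q u0 j) = fm.span (V t)"
  proof (rule span_eqI)
    show "(\<Union>j\<in>{0..t}. Hom d q u0 j) \<subseteq> fm.span (V t)"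
    proof (rule UN_least)
      fix j assume j: "j \<in> {0..t}"
      have "fz d q u0 j ` shell d q u0 j \<subseteq> fm.span (V t)"
      proof (rule image_subsetI)
        fix z assume z: "z \<in> shell d q u0 j"
        have "card {i. i < d \<and> u0!i \<noteq> z!i} = j" using z lu by (simp add: shell_def hdist_def)
        then have "ind {i. i < d \<and> u0!i \<noteq> z!i} z \<in> V t" using j by (intro ind_V) auto
        then show "fz d q u0 j z \<in> fm.span (V t)" using fz_eq[OF u0 z] by (simp add: fm.span_base)
      qed
      then show "Hom d q u0 j \<subseteq> fm.span (V t)"
        unfolding Hom_def fspan_eq by (rule fm.span_minimal[OF _ fm.subspace_span])
    qed
    show "V t \<subseteq> fm.span (\<Union>j\<in>{0..t}. Hom d q u0 j)" using V_in_Hom[OF u0] by blast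
  qed
  moreover have "fm.span (\<Union>j\<in>{0..t}. Lsp d q j) = fm.span (V t)"
  proof (rule span_eqI)
    show "(\<Union>j\<in>{0..t}. Lsp d q j) \<subseteq> fm.span (V t)" using Lsp_in_V by auto
    show "V t \<subseteq> fm.span (\<Union>j\<in>{0..t}. Lsp d q j)" using V_in_Lsp by blast
  qed
  ultimately show ?thesis by (simp add: fspan_eq)
qed


end
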